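(* Fix a dimension $D\geqslant 2$. For every integer $n$ and every integer $k$ with $0<k<n$, $$\delta(n,k) \geqslant \frac{2}{\pi}\Big\lfloor \frac{n}{k+1}\Big\rfloor - 1.$$
   Context: For a graph $G$ whose vertices are points in $\mathbb{R}^D$, each edge $(u,v)$ has weight equal to the Euclidean distance $d(u,v)$ (edges may cross or overlap), and $d_G(u,v)$ is the length of a shortest path in $G$ between $u$ and $v$. The dilation of $G$ is $\Delta(G)=\max_{u\neq v\in V(G)} d_G(u,v)/d(u,v)$ (infinite if $G$ is disconnected). For a finite set $S$ of $n$ points and an integer $k\ge0$, $\Delta(S,k)$ is the minimum of $\Delta(G)$ over all graphs $G$ with vertex set exactly $S$ and exactly $n-1+k$ edges. $\delta(n,k)=\sup\{\Delta(S,k): S\subset\mathbb{R}^D,\ |S|=n\}$. *)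

theory Defs
  imports "HOL-Analysis.Analysis"
begin

definition geo_graph :: "'a set \<Rightarrow> 'a set set \<Rightarrow> bool" where
  "geo_graph S E \<longleftrightarrow> (\<forall>e\<in>E. e \<subseteq> S \<and> card e = 2)"

definition is_walk :: "'a set set \<Rightarrow> 'a \<Rightarrow> 'a \<Rightarrow> 'a list \<Rightarrow> bool" where
  "is_walk E u v ps \<longleftrightarrow> ps \<noteq> [] \<and> hd ps = u \<and> last ps = v \<and>
     (\<forall>i. Suc i < length ps \<longrightarrow> {ps ! i, ps ! Suc i} \<in> E)"

definition walk_length :: "'a::metric_space list \<Rightarrow> real" where
  "walk_length ps = (\<Sum>i<length ps - 1. dist (ps ! i) (ps ! Suc i))"

text \<open>Shortest-path distance (infinite if no path exists).\<close>
definition graph_dist :: "'a set set \<Rightarrow> 'a::metric_space \<Rightarrow> 'a \<Rightarrow> ereal" where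
  "graph_dist E u v = (INF ps \<in> {ps. is_walk E u v ps}. ereal (walk_length ps))"

definition dilation :: "'a::metric_space set \<Rightarrow> 'a set set \<Rightarrow> ereal" where
  "dilation S E = (SUP p \<in> {(u, v). u \<in> S \<and> v \<in> S \<and> u \<noteq> v}.
      graph_dist E (fst p) (snd p) / ereal (dist (fst p) (snd p)))"

definition min_dilation :: "'a::metric_space set \<Rightarrow> nat \<Rightarrow> ereal" where
  "min_dilation S k = (INF E \<in> {E. geo_graph S E \<and> card E = card S - 1 + k}. dilation S E)"

definition delta :: "'a::metric_space itself \<Rightarrow> nat \<Rightarrow> nat \<Rightarrow> ereal" where
  "delta _ n k = (SUP S \<in> {S :: 'a set. finite S \<and> card S = n}. min_dilation S k)"

end

theory Submission
  imports Defs
begin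

lemma jordan:
  fixes x :: real assumes "0 \<le> x" "x \<le> pi/2"
  shows "2 * x / pi \<le> sin x"
proof -
  have cv: "convex_on {0..pi/2} (\<lambda>x. - sin x)"
    by (rule f''_ge0_imp_convex[where f'="\<lambda>x. - cos x" and f''="\<lambda>x. sin x"])
       (auto intro!: derivative_eq_intros sin_ge_zero)
  define t where "t = 2 * x / pi"
  have t: "0 \<le> t" "t \<le> 1" using assms pi_gt_zero by (auto simp: t_def field_simps)
  have "- sin ((1 - t) *\<^sub>R 0 + t *\<^sub>R (pi/2)) \<le> (1 - t) * (- sin 0) + t * (- sin (pi/2))"
    using convex_onD[OF cv, of t 0 "pi/2"] t by auto
  moreover have "(1 - t) *\<^sub>R 0 + t *\<^sub>R (pi/2) = x" using pi_gt_zero by (simp add: t_def)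
  ultimately show ?thesis by (simp add: t_def)
qed

lemma cis_chord: "cmod (cis A - cis B) = 2 * \<bar>sin ((A - B)/2)\<bar>"
proof -
  have "cis A - cis B = cis ((A+B)/2) * (cis ((A-B)/2) - cis (-((A-B)/2)))"
  proof -
    have e1: "(A+B)/2 - (A-B)/2 = B" "(A-B)/2 + (A+B)/2 = A" by (simp_all add: field_simps)
    show ?thesis by (simp add: algebra_simps cis_mult e1)
  qed
  also have "cis ((A-B)/2) - cis (-((A-B)/2)) = Complex 0 (2 * sin ((A-B)/2))"
    by (simp add: cis.ctr complex_eq_iff)
  finally have eq: "cis A - cis B = cis ((A + B) / 2) * Complex 0 (2 * sin ((A - B) / 2))" .
  have "cmod (cis A - cis B) = cmod (Complex 0 (2 * sin ((A - B) / 2)))"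
    unfolding eq norm_mult norm_cis by simp
  also have "\<dots> = 2 * \<bar>sin ((A - B)/2)\<bar>" by (simp add: complex_norm real_sqrt_mult)
  finally show ?thesis .
qed

lemma abs_sin_shift: "\<bar>sin (x + pi * of_int c)\<bar> = \<bar>sin x\<bar>"
proof -
  have s0: "sin (pi * of_int c) = 0" by simp
  have "(cos (pi * of_int c))^2 = 1" using sin_cos_squared_add[of "pi * of_int c"] s0 by simp
  hence "\<bar>cos (pi * of_int c)\<bar> = 1" by (simp add: power2_eq_1_iff abs_if)
  thus ?thesis by (simp add: sin_add s0 abs_mult)
qed

definition sdisp :: "nat \<Rightarrow> nat \<Rightarrow> nat \<Rightarrow> int" where
  "sdisp M a b = (let d = (int b - int a) mod int M in
     if 2*d < int M then d else if 2*d > int M then d - int M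
     else if a < b then d else d - int M)"

lemma sdisp_cong: "\<exists>c. sdisp M a b = int b - int a + int M * c"
proof -
  define d where "d = (int b - int a) mod int M"
  have dq: "d = int b - int a + int M * (- ((int b - int a) div int M))"
    unfolding d_def by (simp add: algebra_simps minus_div_mult_eq_mod[symmetric])
  hence "\<exists>c. d = int b - int a + int M * c" by blast
  moreover have "d - int M = int b - int a + int M * (- ((int b - int a) div int M) - 1)"
    using dq by (simp add: algebra_simps)
  hence "\<exists>c. d - int M = int b - int a + int M * c" by blast
  ultimately show ?thesis unfolding sdisp_def Let_def d_def[symmetric] by presburger
qed

lemma sdisp_abs: assumes "0 < M" shows "2 * \<bar>sdisp M a b\<bar> \<le> int M"
proof -
  define d where "d = (int b - int a) mod int M"
  have "0 \<le> d" "d < int M" using assms by (auto simp: d_def)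
  thus ?thesis unfolding sdisp_def Let_def d_def[symmetric] by auto
qed

lemma sdisp_anti: assumes "a < M" "b < M" shows "sdisp M b a = - sdisp M a b"
proof (cases "a = b")
  case True thus ?thesis by (simp add: sdisp_def)
next
  case False
  define d where "d = (int b - int a) mod int M"
  define d' where "d' = (int a - int b) mod int M"
  have M: "0 < M" using assms by auto
  have d: "0 \<le> d" "d < int M" using M by (auto simp: d_def)
  have "d \<noteq> 0"
  proof
    assume "d = 0"
    hence "int M dvd (int b - int a)" by (simp add: d_def dvd_eq_mod_eq_0)
    then obtain q where q: "int b - int a = int M * q" by blast
    have "\<bar>int b - int a\<bar> < int M" using assms by auto
    have "q = 0"
    proof (rule ccontr)
      assume "q \<noteq> 0"
      hence "1 \<le> \<bar>q\<bar>" by linarith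
      hence "int M * 1 \<le> int M * \<bar>q\<bar>" by (intro mult_left_mono) auto
      thus False using \<open>\<bar>int b - int a\<bar> < int M\<close> q by (simp add: abs_mult)
    qed
    thus False using q False by simp
  qed
  have "d' = (- (int b - int a)) mod int M" by (simp add: d'_def)
  also have "\<dots> = int M - d" using \<open>d \<noteq> 0\<close> zmod_zminus1_eq_if[of "int b - int a" "int M"]
    unfolding d_def by presburger
  finally have dd: "d' = int M - d" .
  show ?thesis unfolding sdisp_def Let_def d_def[symmetric] d'_def[symmetric] dd
    using d \<open>d \<noteq> 0\<close> False by auto
qed

lemma chord_sdisp:
  assumes "0 < M"
  shows "cmod (cis (2*pi*real a/real M) - cis (2*pi*real b/real M)) = 2 * \<bar>sin (pi * real_of_int (sdisp M a b) / real M)\<bar>"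
proof -
  obtain c where c: "sdisp M a b = int b - int a + int M * c" using sdisp_cong by blast
  have e: "(2*pi*real a/real M - 2*pi*real b/real M)/2 = - (pi * real_of_int (sdisp M a b) / real M) + pi * of_int c"
    using assms by (simp add: c field_simps)
  have "cmod (cis (2*pi*real a/real M) - cis (2*pi*real b/real M)) = 2 * \<bar>sin ((2*pi*real a/real M - 2*pi*real b/real M)/2)\<bar>"
    by (rule cis_chord)
  also have "\<dots> = 2 * \<bar>sin (- (pi * real_of_int (sdisp M a b) / real M) + pi * of_int c)\<bar>"
    by (simp only: e)
  also have "\<dots> = 2 * \<bar>sin (pi * real_of_int (sdisp M a b) / real M)\<bar>"
    by (simp only: abs_sin_shift) simp
  finally show ?thesis .
qed

lemma sdisp_chord_lower:
  assumes "0 < M"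
  shows "4 * \<bar>real_of_int (sdisp M a b)\<bar> / real M \<le> cmod (cis (2*pi*real a/real M) - cis (2*pi*real b/real M))"
proof -
  define s where "s = sdisp M a b"
  have s2: "2 * \<bar>s\<bar> \<le> int M" using sdisp_abs[OF assms] by (simp add: s_def)
  define x where "x = pi * \<bar>real_of_int s\<bar> / real M"
  have x0: "0 \<le> x" by (simp add: x_def)
  have "2 * \<bar>real_of_int s\<bar> \<le> real M" using s2 by linarith
  hence x1: "x \<le> pi/2" using assms pi_gt_zero unfolding x_def by (simp add: field_simps)
  have "\<bar>sin (pi * real_of_int s / real M)\<bar> = sin x"
  proof (cases "0 \<le> s")
    case True
    have "0 \<le> sin x" using x0 x1 pi_gt_zero by (intro sin_ge_zero) auto
    moreover have "pi * real_of_int s / real M = x" using True by (simp add: x_def)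
    ultimately show ?thesis by simp
  next
    case False
    hence "pi * real_of_int s / real M = - x" by (simp add: x_def)
    thus ?thesis using x0 x1 sin_ge_zero[of x] by simp
  qed
  moreover have "2 * x / pi \<le> sin x" using jordan x0 x1 by blast
  moreover have "2 * x / pi = 2 * \<bar>real_of_int s\<bar> / real M" unfolding x_def by simp
  ultimately show ?thesis unfolding chord_sdisp[OF assms] s_def[symmetric] by simp
qed

lemma sdisp_adj:
  assumes "2 \<le> M" "a < M"
  shows "\<bar>sdisp M a (Suc a mod M)\<bar> \<le> 1"
proof -
  obtain c where c: "sdisp M a (Suc a mod M) = int (Suc a mod M) - int a + int M * c" using sdisp_cong by blast
  have s2: "2 * \<bar>sdisp M a (Suc a mod M)\<bar> \<le> int M" using sdisp_abs assms by simp
  have "int (Suc a mod M) - int a = 1 \<or> int (Suc a mod M) - int a = 1 - int M"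
  proof (cases "Suc a < M")
    case True thus ?thesis by simp
  next
    case False hence "Suc a = M" using assms by simp
    thus ?thesis by simp
  qed
  hence "\<exists>c'. sdisp M a (Suc a mod M) = 1 + int M * c'"
  proof
    assume "int (Suc a mod M) - int a = 1"
    thus ?thesis using c by auto
  next
    assume "int (Suc a mod M) - int a = 1 - int M"
    thus ?thesis using c by (intro exI[of _ "c - 1"]) (simp add: algebra_simps)
  qed
  then obtain c' where c': "sdisp M a (Suc a mod M) = 1 + int M * c'" by blast
  show ?thesis
  proof (cases "c' = 0")
    case True thus ?thesis using c' by simp
  next
    case False
    show ?thesis
    proof (cases "c' > 0")
      case True
      hence "int M * 1 \<le> int M * c'" by (intro mult_left_mono) auto
      thus ?thesis using s2 c' by linarith
    next
      case False2: False
      hence "int M * c' \<le> int M * (-1)" using False by (intro mult_left_mono) auto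
      thus ?thesis using s2 c' assms by linarith
    qed
  qed
qed

lemma chord_adj_upper:
  assumes "2 \<le> M" "a < M"
  shows "cmod (cis (2*pi*real a/real M) - cis (2*pi*real (Suc a mod M)/real M)) \<le> 2 * pi / real M"
proof -
  have M: "0 < M" using assms by simp
  have "\<bar>sin (pi * real_of_int (sdisp M a (Suc a mod M)) / real M)\<bar> \<le> \<bar>pi * real_of_int (sdisp M a (Suc a mod M)) / real M\<bar>"
    by (rule abs_sin_x_le_abs_x)
  also have "\<dots> = pi * \<bar>real_of_int (sdisp M a (Suc a mod M))\<bar> / real M" by (simp add: abs_mult)
  also have "\<dots> \<le> pi * 1 / real M" using sdisp_adj[OF assms] M
    by (intro divide_right_mono mult_left_mono) auto
  finally show ?thesis unfolding chord_sdisp[OF M] by simp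
qed

lemma tree_potential:
  fixes S :: "'a set" and E :: "'a set set"
  assumes fin: "finite S" and gg: "geo_graph S E" and r: "r \<in> S"
    and conn: "\<forall>v\<in>S. (\<lambda>x y. {x,y} \<in> E)\<^sup>*\<^sup>* v r"
  shows "\<exists>T \<subseteq> E. card T = card S - 1 \<and>
    (\<forall>\<delta>::'a\<Rightarrow>'a\<Rightarrow>int. (\<forall>x y. \<delta> y x = - \<delta> x y) \<longrightarrow> (\<exists>h. \<forall>x y. {x,y} \<in> T \<longrightarrow> h y - h x = \<delta> x y))"
proof -
  define A where "A = (\<lambda>x y. {x,y} \<in> E)"
  define d where "d = (\<lambda>v. LEAST t. (A ^^ t) v r)"
  define par where "par = (\<lambda>v. SOME p. A v p \<and> (A ^^ (d v - 1)) p r)"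
  have dv: "(A ^^ d v) v r" if "v \<in> S" for v
  proof -
    have "A\<^sup>*\<^sup>* v r" using conn that unfolding A_def by blast
    then obtain t where "(A ^^ t) v r" using rtranclp_imp_relpowp by metis
    thus ?thesis unfolding d_def by (rule LeastI)
  qed
  have dmin: "d v \<le> t" if "(A ^^ t) v r" for v t
    unfolding d_def using that by (rule Least_le)
  have dpos: "0 < d v" if "v \<in> S" "v \<noteq> r" for v
  proof (rule ccontr)
    assume "\<not> 0 < d v" hence "d v = 0" by simp
    with dv[OF that(1)] have "(A ^^ 0) v r" by simp
    hence "v = r" by (rule relpowp_0_E)
    with that show False by simp
  qed
  have par: "A v (par v) \<and> (A ^^ (d v - 1)) (par v) r" if "v \<in> S" "v \<noteq> r" for v
  proof -
    have "(A ^^ Suc (d v - 1)) v r" using dv[OF that(1)] dpos[OF that] by simp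
    hence "\<exists>p. A v p \<and> (A ^^ (d v - 1)) p r" by (rule relpowp_Suc_D2)
    thus ?thesis unfolding par_def by (rule someI_ex)
  qed
  have dpar: "d (par v) = d v - 1" if "v \<in> S" "v \<noteq> r" for v
  proof -
    have "(A ^^ (d v - 1)) (par v) r" using par[OF that] by blast
    hence "d (par v) \<le> d v - 1" by (rule dmin)
    moreover have "(A ^^ d (par v)) (par v) r" unfolding d_def
      using par[OF that] by (intro LeastI) blast
    hence "(A ^^ Suc (d (par v))) v r" using par[OF that] by (intro relpowp_Suc_I2) auto
    hence "d v \<le> Suc (d (par v))" by (rule dmin)
    ultimately show ?thesis by simp
  qed
  define T where "T = (\<lambda>v. {v, par v}) ` (S - {r})"
  have TE: "T \<subseteq> E" using par unfolding T_def A_def by auto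
  have inj: "inj_on (\<lambda>v. {v, par v}) (S - {r})"
  proof (rule inj_onI)
    fix v w assume v: "v \<in> S - {r}" and w: "w \<in> S - {r}" and eq: "{v, par v} = {w, par w}"
    show "v = w"
    proof (rule ccontr)
      assume "v \<noteq> w"
      hence vw: "v = par w" "w = par v" using eq by (auto simp: doubleton_eq_iff)
      have v': "v \<in> S" "v \<noteq> r" and w': "w \<in> S" "w \<noteq> r" using v w by auto
      have "d v = d w - 1" using dpar[OF w'] vw(1) by simp
      moreover have "d w = d v - 1" using dpar[OF v'] vw(2) by simp
      moreover have "0 < d v" "0 < d w" using dpos[OF v'] dpos[OF w'] by auto
      ultimately show False by linarith
    qed
  qed
  have cardT: "card T = card S - 1"
    unfolding T_def using card_image[OF inj] fin r by simp
  have pot: "\<exists>h. \<forall>x y. {x,y} \<in> T \<longrightarrow> h y - h x = \<delta> x y" if anti: "\<forall>x y. \<delta> y x = - \<delta> x y" for \<delta> :: "'a\<Rightarrow>'a\<Rightarrow>int"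
  proof -
    define h where "h = (\<lambda>v. \<Sum>t<d v. \<delta> ((par ^^ Suc t) v) ((par ^^ t) v))"
    have rec: "h v - h (par v) = \<delta> (par v) v" if "v \<in> S" "v \<noteq> r" for v
    proof -
      have "d v = Suc (d (par v))" using dpar[OF that] dpos[OF that] by simp
      hence "h v = \<delta> (par v) v + (\<Sum>t<d (par v). \<delta> ((par ^^ Suc (Suc t)) v) ((par ^^ Suc t) v))"
        unfolding h_def by (simp only: sum.lessThan_Suc_shift) simp
      also have "(\<Sum>t<d (par v). \<delta> ((par ^^ Suc (Suc t)) v) ((par ^^ Suc t) v)) = h (par v)"
        unfolding h_def by (simp only: funpow_Suc_right o_def)
      finally show ?thesis by simp
    qed
    show ?thesis
    proof (intro exI allI impI)
      fix x y assume "{x,y} \<in> T"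
      then obtain v where v: "v \<in> S" "v \<noteq> r" and xy: "{x,y} = {v, par v}" unfolding T_def by auto
      from xy have "(x = v \<and> y = par v) \<or> (x = par v \<and> y = v)" by (auto simp: doubleton_eq_iff)
      moreover have "\<delta> v (par v) = - \<delta> (par v) v" using anti by blast
      ultimately show "h y - h x = \<delta> x y" using rec[OF v] by auto
    qed
  qed
  show ?thesis using TE cardT pot by blast
qed

lemma sum_rot:
  fixes g :: "nat \<Rightarrow> int"
  assumes "0 < M"
  shows "(\<Sum>i<M. g (Suc i mod M)) = (\<Sum>i<M. g i)"
proof -
  obtain M' where M: "M = Suc M'" using assms by (cases M) auto
  have "(\<Sum>i<Suc M'. g (Suc i mod Suc M')) = (\<Sum>i<M'. g (Suc i mod Suc M')) + g 0"
    by (simp add: sum.lessThan_Suc)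
  also have "(\<Sum>i<M'. g (Suc i mod Suc M')) = (\<Sum>i<M'. g (Suc i))"
    by (intro sum.cong) auto
  also have "(\<Sum>i<M'. g (Suc i)) + g 0 = (\<Sum>i<Suc M'. g i)"
    by (simp only: sum.lessThan_Suc_shift add.commute)
  finally show ?thesis unfolding M .
qed

lemma comb:
  fixes S :: "'a set" and E :: "'a set set" and P :: "nat \<Rightarrow> nat \<Rightarrow> 'a" and M :: "nat \<Rightarrow> nat"
  assumes fin: "finite S" and gg: "geo_graph S E" and r: "r \<in> S"
    and conn: "\<forall>v\<in>S. (\<lambda>x y. {x,y} \<in> E)\<^sup>*\<^sup>* v r"
    and cardE: "card E \<le> card S - 1 + k"
    and M2: "\<forall>j\<le>k. 2 \<le> M j"
    and Pinj: "\<forall>j\<le>k. \<forall>j'\<le>k. \<forall>a<M j. \<forall>b<M j'. P j a = P j' b \<longrightarrow> j = j' \<and> a = b"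
  shows "\<exists>j\<le>k. \<exists>i<M j. \<not> (\<exists>as. as \<noteq> [] \<and> hd as = i \<and> last as = Suc i mod M j \<and> (\<forall>a\<in>set as. a < M j)
     \<and> (\<forall>t. Suc t < length as \<longrightarrow> {P j (as!t), P j (as!Suc t)} \<in> E)
     \<and> (\<Sum>t<length as - 1. sdisp (M j) (as!t) (as!Suc t)) = 1)"
proof -
  obtain T where TE: "T \<subseteq> E" and cardT: "card T = card S - 1"
    and pot: "\<And>\<delta>::'a\<Rightarrow>'a\<Rightarrow>int. (\<forall>x y. \<delta> y x = - \<delta> x y) \<Longrightarrow> (\<exists>h. \<forall>x y. {x,y} \<in> T \<longrightarrow> h y - h x = \<delta> x y)"
    using tree_potential[OF fin gg r conn] by blast
  have finE: "finite E"
  proof -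
    have "E \<subseteq> Pow S" using gg unfolding geo_graph_def by auto
    thus ?thesis using fin finite_subset by blast
  qed
  define G where "G = (\<lambda>j. P j ` {..<M j})"
  have "\<exists>j\<le>k. \<forall>e\<in>E. e \<subseteq> G j \<longrightarrow> e \<in> T"
  proof (rule ccontr)
    assume "\<not> ?thesis"
    hence ex: "\<forall>j\<le>k. \<exists>e. e \<in> E \<and> e \<subseteq> G j \<and> e \<notin> T" by auto
    define ee where "ee = (\<lambda>j. SOME e. e \<in> E \<and> e \<subseteq> G j \<and> e \<notin> T)"
    have ee: "ee j \<in> E \<and> ee j \<subseteq> G j \<and> ee j \<notin> T" if "j \<le> k" for j
    proof -
      from ex that obtain e where "e \<in> E \<and> e \<subseteq> G j \<and> e \<notin> T" by blast
      thus ?thesis unfolding ee_def by (rule someI)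
    qed
    have "inj_on ee {..k}"
    proof (rule inj_onI)
      fix j j' assume j: "j \<in> {..k}" and j': "j' \<in> {..k}" and eq: "ee j = ee j'"
      have jk: "j \<le> k" "j' \<le> k" using j j' by auto
      have eeE: "ee j \<in> E" using ee[OF jk(1)] by blast
      have "card (ee j) = 2" using eeE gg unfolding geo_graph_def by blast
      hence "ee j \<noteq> {}" by auto
      then obtain x where x: "x \<in> ee j" by blast
      have "x \<in> G j" using x ee[OF jk(1)] by blast
      then obtain a where a: "a \<in> {..<M j}" "x = P j a" unfolding G_def by (rule imageE)
      have "x \<in> G j'" using x ee[OF jk(2)] eq by blast
      then obtain b where b: "b \<in> {..<M j'}" "x = P j' b" unfolding G_def by (rule imageE)
      have ab: "a < M j" "b < M j'" using a b by auto
      have "P j a = P j' b" using a b by simp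
      thus "j = j'" using Pinj jk ab(1,2) by blast
    qed
    moreover have "ee ` {..k} \<subseteq> E - T" using ee by blast
    ultimately have "card {..k} \<le> card (E - T)"
      using finE by (intro card_inj_on_le) auto
    also have "card (E - T) = card E - card T"
      using TE finite_subset[OF TE finE] by (intro card_Diff_subset) auto
    finally show False using cardE cardT by simp
  qed
  then obtain j where j: "j \<le> k" and FT: "\<forall>e\<in>E. e \<subseteq> G j \<longrightarrow> e \<in> T" by blast
  define Mj where "Mj = M j"
  have Mj: "2 \<le> Mj" using M2 j by (simp add: Mj_def)
  have injP: "inj_on (P j) {..<Mj}" using Pinj j by (auto simp: inj_on_def Mj_def)
  define iv where "iv = the_inv_into {..<Mj} (P j)"
  have iv: "iv (P j a) = a" if "a < Mj" for a
    unfolding iv_def using injP that by (simp add: the_inv_into_f_f)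
  define \<delta> where "\<delta> = (\<lambda>x y. if x \<in> G j \<and> y \<in> G j then sdisp Mj (iv x) (iv y) else 0)"
  have anti: "\<forall>x y. \<delta> y x = - \<delta> x y"
  proof (intro allI)
    fix x y
    show "\<delta> y x = - \<delta> x y"
    proof (cases "x \<in> G j \<and> y \<in> G j")
      case True
      then obtain a b where "a < Mj" "b < Mj" "x = P j a" "y = P j b" unfolding G_def Mj_def by auto
      thus ?thesis unfolding \<delta>_def using sdisp_anti[of a Mj b] iv by auto
    qed (auto simp: \<delta>_def)
  qed
  obtain h where h: "\<And>x y. {x,y} \<in> T \<Longrightarrow> h y - h x = \<delta> x y" using pot[OF anti] by blast
  show ?thesis
  proof (rule ccontr)
    assume "\<not> ?thesis"
    hence allw: "\<forall>i<Mj. \<exists>as. as \<noteq> [] \<and> hd as = i \<and> last as = Suc i mod Mj \<and> (\<forall>a\<in>set as. a < Mj)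
     \<and> (\<forall>t. Suc t < length as \<longrightarrow> {P j (as!t), P j (as!Suc t)} \<in> E)
     \<and> (\<Sum>t<length as - 1. sdisp Mj (as!t) (as!Suc t)) = 1" using j unfolding Mj_def by blast
    have step: "h (P j (Suc i mod Mj)) - h (P j i) = 1" if i: "i < Mj" for i
    proof -
      obtain as where as: "as \<noteq> []" "hd as = i" "last as = Suc i mod Mj" "\<forall>a\<in>set as. a < Mj"
        "\<forall>t. Suc t < length as \<longrightarrow> {P j (as!t), P j (as!Suc t)} \<in> E"
        "(\<Sum>t<length as - 1. sdisp Mj (as!t) (as!Suc t)) = 1" using allw i by blast
      have eqt: "sdisp Mj (as!t) (as!Suc t) = h (P j (as!Suc t)) - h (P j (as!t))" if t: "t < length as - 1" for t
      proof -
        have l: "as!t < Mj" "as!Suc t < Mj" using as(4) t by auto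
        have "{P j (as!t), P j (as!Suc t)} \<in> E" using as(5) t by auto
        moreover have "{P j (as!t), P j (as!Suc t)} \<subseteq> G j" using l unfolding G_def Mj_def by auto
        ultimately have "{P j (as!t), P j (as!Suc t)} \<in> T" using FT by blast
        hence "h (P j (as!Suc t)) - h (P j (as!t)) = \<delta> (P j (as!t)) (P j (as!Suc t))" by (rule h)
        also have "\<dots> = sdisp Mj (as!t) (as!Suc t)"
          using l iv unfolding \<delta>_def G_def Mj_def by auto
        finally show ?thesis by simp
      qed
      have "(\<Sum>t<length as - 1. sdisp Mj (as!t) (as!Suc t)) = (\<Sum>t<length as - 1. h (P j (as!Suc t)) - h (P j (as!t)))"
        by (rule sum.cong[OF refl]) (simp add: eqt)
      hence "1 = (\<Sum>t<length as - 1. h (P j (as!Suc t)) - h (P j (as!t)))"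
        using as(6) by simp
      also have "\<dots> = h (P j (as!(length as - 1))) - h (P j (as!0))"
        by (rule sum_lessThan_telescope)
      also have "\<dots> = h (P j (Suc i mod Mj)) - h (P j i)"
        using as(1-3) by (simp add: last_conv_nth hd_conv_nth)
      finally show ?thesis by simp
    qed
    have "(\<Sum>i<Mj. h (P j (Suc i mod Mj)) - h (P j i)) = (\<Sum>i<Mj. (1::int))"
      using step by (intro sum.cong) auto
    moreover have "(\<Sum>i<Mj. h (P j (Suc i mod Mj)) - h (P j i)) = 0"
      using sum_rot[of Mj "\<lambda>i. h (P j i)"] Mj by (simp add: sum_subtractf)
    ultimately show False using Mj by simp
  qed
qed

lemma walk_rtrancl:
  assumes "is_walk E u v ps"
  shows "(\<lambda>x y. {x,y} \<in> E)\<^sup>*\<^sup>* u v"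
proof -
  have ne: "ps \<noteq> []" and hd: "hd ps = u" and lst: "last ps = v"
    and st: "\<And>i. Suc i < length ps \<Longrightarrow> {ps ! i, ps ! Suc i} \<in> E"
    using assms unfolding is_walk_def by auto
  have "(\<lambda>x y. {x,y} \<in> E)\<^sup>*\<^sup>* (ps ! 0) (ps ! t)" if "t < length ps" for t
    using that
  proof (induction t)
    case 0 show ?case by simp
  next
    case (Suc t)
    hence "(\<lambda>x y. {x,y} \<in> E)\<^sup>*\<^sup>* (ps ! 0) (ps ! t)" by simp
    moreover have "{ps ! t, ps ! Suc t} \<in> E" using st Suc.prems by simp
    ultimately show ?case by (rule rtranclp.rtrancl_into_rtrancl)
  qed
  from this[of "length ps - 1"] ne hd lst show ?thesis
    by (simp add: hd_conv_nth last_conv_nth)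
qed

lemma walk_length_ge:
  fixes ps :: "'a::metric_space list"
  assumes "t < length ps"
  shows "dist (ps ! 0) (ps ! t) \<le> walk_length ps"
proof -
  have "dist (ps ! 0) (ps ! t) \<le> (\<Sum>i<t. dist (ps ! i) (ps ! Suc i))" for t
  proof (induction t)
    case 0 show ?case by simp
  next
    case (Suc t)
    have "dist (ps ! 0) (ps ! Suc t) \<le> dist (ps ! 0) (ps ! t) + dist (ps ! t) (ps ! Suc t)"
      by (rule dist_triangle)
    also have "\<dots> \<le> (\<Sum>i<Suc t. dist (ps ! i) (ps ! Suc i))" using Suc by simp
    finally show ?case .
  qed
  also have "(\<Sum>i<t. dist (ps ! i) (ps ! Suc i)) \<le> walk_length ps"
    unfolding walk_length_def using assms by (intro sum_mono2) auto
  finally show ?thesis .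
qed

lemma graph_dist_ge:
  assumes "\<And>ps. is_walk E u v ps \<Longrightarrow> c \<le> walk_length ps"
  shows "ereal c \<le> graph_dist E u v"
  unfolding graph_dist_def using assms by (auto intro!: INF_greatest)

lemma graph_dist_nowalk:
  assumes "\<not> (\<lambda>x y. {x,y} \<in> E)\<^sup>*\<^sup>* u v"
  shows "graph_dist E u v = \<infinity>"
proof -
  have "{ps. is_walk E u v ps} = {}" using walk_rtrancl[of E u v] assms by auto
  hence "graph_dist E u v = Inf {}" unfolding graph_dist_def by (metis image_empty)
  thus ?thesis by (simp add: top_ereal_def)
qed

lemma dilation_ge:
  assumes "u \<in> S" "v \<in> S" "u \<noteq> v" "ereal c \<le> graph_dist E u v" "0 \<le> c"
  shows "ereal (c / dist u v) \<le> dilation S E"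
proof -
  have d: "0 < dist u v" using assms by simp
  have "ereal (c / dist u v) = ereal c / ereal (dist u v)" using d by simp
  also have "\<dots> \<le> graph_dist E u v / ereal (dist u v)"
    using assms(4) d by (intro ereal_divide_right_mono) auto
  also have "\<dots> \<le> dilation S E" unfolding dilation_def
    using assms(1-3) by (intro SUP_upper2[of "(u,v)"]) auto
  finally show ?thesis .
qed

lemma dilation_inf:
  assumes "u \<in> S" "v \<in> S" "u \<noteq> v" "graph_dist E u v = \<infinity>"
  shows "dilation S E = \<infinity>"
proof -
  have d: "0 < dist u v" using assms by simp
  have "\<infinity> = graph_dist E u v / ereal (dist u v)" using d assms(4) by simp
  also have "\<dots> \<le> dilation S E" unfolding dilation_def
    using assms(1-3) by (intro SUP_upper2[of "(u,v)"]) auto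
  finally show ?thesis by (simp add: top_ereal_def[symmetric] top_unique)
qed

definition emb :: "'a::euclidean_space \<Rightarrow> 'a \<Rightarrow> complex \<Rightarrow> 'a" where
  "emb u1 u2 z = Re z *\<^sub>R u1 + Im z *\<^sub>R u2"

lemma norm_emb:
  assumes "u1 \<in> Basis" "u2 \<in> Basis" "u1 \<noteq> u2"
  shows "norm (emb u1 u2 z) = cmod z"
proof -
  have "(norm (emb u1 u2 z))^2 = inner (emb u1 u2 z) (emb u1 u2 z)" by (simp add: dot_square_norm)
  also have "\<dots> = (Re z)^2 + (Im z)^2"
    using assms unfolding emb_def
    by (simp add: inner_add_left inner_add_right inner_Basis power2_eq_square inner_commute)
  also have "\<dots> = (cmod z)^2" by (simp add: cmod_power2)
  finally show ?thesis by (simp add: power2_eq_iff_nonneg)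
qed

lemma dist_emb:
  assumes "u1 \<in> Basis" "u2 \<in> Basis" "u1 \<noteq> u2"
  shows "dist (emb u1 u2 z) (emb u1 u2 w) = cmod (z - w)"
proof -
  have "emb u1 u2 z - emb u1 u2 w = emb u1 u2 (z - w)" unfolding emb_def by (simp add: algebra_simps)
  thus ?thesis using norm_emb[OF assms] by (simp add: dist_norm)
qed

definition pt :: "'a::euclidean_space \<Rightarrow> 'a \<Rightarrow> (nat \<Rightarrow> nat) \<Rightarrow> nat \<Rightarrow> nat \<Rightarrow> 'a" where
  "pt u1 u2 M j a = emb u1 u2 (of_real (6 * real j) + cis (2*pi*real a/real (M j)))"

lemma dist_same:
  assumes "u1 \<in> Basis" "u2 \<in> Basis" "u1 \<noteq> u2"
  shows "dist (pt u1 u2 M j a) (pt u1 u2 M j b) = cmod (cis (2*pi*real a/real (M j)) - cis (2*pi*real b/real (M j)))"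
  unfolding pt_def dist_emb[OF assms] by simp

lemma dist_diff:
  assumes "u1 \<in> Basis" "u2 \<in> Basis" "u1 \<noteq> u2" "j \<noteq> j'"
  shows "4 \<le> dist (pt u1 u2 M j a) (pt u1 u2 M j' b)"
proof -
  define w where "w = cis (2*pi*real a/real (M j)) - cis (2*pi*real b/real (M j'))"
  have w: "cmod w \<le> 2" unfolding w_def using norm_triangle_ineq4[of "cis (2*pi*real a/real (M j))" "cis (2*pi*real b/real (M j'))"] by simp
  have jj: "6 \<le> \<bar>6 * real j - 6 * real j'\<bar>" using assms(4) by (cases "j < j'") auto
  have "dist (pt u1 u2 M j a) (pt u1 u2 M j' b) = cmod (of_real (6 * real j - 6 * real j') + w)"
    unfolding pt_def dist_emb[OF assms(1-3)] w_def by (simp add: algebra_simps)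
  also have "\<dots> \<ge> cmod (of_real (6 * real j - 6 * real j')) - cmod w"
    by (metis add_diff_cancel norm_triangle_ineq2 diff_le_eq add.commute norm_diff_ineq)
  also have "cmod (of_real (6 * real j - 6 * real j') :: complex) = \<bar>6 * real j - 6 * real j'\<bar>"
    by (rule norm_of_real)
  finally have "\<bar>6 * real j - 6 * real j'\<bar> - cmod w \<le> dist (pt u1 u2 M j a) (pt u1 u2 M j' b)" .
  thus ?thesis using w jj by linarith
qed

lemma sdisp_dvd: "int M dvd (sdisp M a b - (int b - int a))"
proof -
  obtain c where "sdisp M a b = int b - int a + int M * c" using sdisp_cong by blast
  thus ?thesis by simp
qed

lemma sdisp_nonzero: assumes "a < M" "b < M" "a \<noteq> b" shows "sdisp M a b \<noteq> 0"
proof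
  assume z: "sdisp M a b = 0"
  obtain c where c: "sdisp M a b = int b - int a + int M * c" using sdisp_cong by blast
  hence q: "int a - int b = int M * c" using z by simp
  have lt: "\<bar>int a - int b\<bar> < int M" using assms by auto
  have "c = 0"
  proof (rule ccontr)
    assume "c \<noteq> 0"
    hence "1 \<le> \<bar>c\<bar>" by linarith
    hence "int M * 1 \<le> int M * \<bar>c\<bar>" by (intro mult_left_mono) auto
    thus False using lt q by (simp add: abs_mult)
  qed
  thus False using q assms by simp
qed

lemma disp_big:
  fixes D :: int
  assumes "2 \<le> M" "int M dvd (D - 1)" "D \<noteq> 1"
  shows "real M - 1 \<le> \<bar>real_of_int D\<bar>"
proof -
  obtain q where q: "D - 1 = int M * q" using assms(2) by blast
  have "q \<noteq> 0" using q assms(3) by auto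
  show ?thesis
  proof (cases "q > 0")
    case True
    hence "int M * 1 \<le> int M * q" by (intro mult_left_mono) auto
    hence "int M - 1 \<le> \<bar>D\<bar>" using q by linarith
    thus ?thesis by linarith
  next
    case False
    hence "int M * q \<le> int M * (-1)" using \<open>q \<noteq> 0\<close> by (intro mult_left_mono) auto
    hence "int M - 1 \<le> \<bar>D\<bar>" using q by linarith
    thus ?thesis by linarith
  qed
qed

lemma walk_in_S:
  assumes "geo_graph S E" "is_walk E u v ps" "u \<in> S"
  shows "set ps \<subseteq> S"
proof
  fix x assume "x \<in> set ps"
  then obtain t where t: "t < length ps" "x = ps ! t" by (auto simp: in_set_conv_nth)
  show "x \<in> S"
  proof (cases t)
    case 0 thus ?thesis using assms t unfolding is_walk_def by (metis hd_conv_nth)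
  next
    case (Suc t')
    hence "{ps ! t', ps ! t} \<in> E" using assms(2) t unfolding is_walk_def by auto
    thus ?thesis using assms(1) t unfolding geo_graph_def by auto
  qed
qed

lemma walk_bound:
  fixes u1 u2 :: "'a::euclidean_space"
  assumes B: "u1 \<in> Basis" "u2 \<in> Basis" "u1 \<noteq> u2"
    and gg: "geo_graph S E"
    and Sdef: "S = (\<lambda>(j,a). pt u1 u2 M j a) ` (SIGMA j:{..k}. {..<M j})"
    and j: "j \<le> k" and M2: "2 \<le> M j" and i: "i < M j"
    and inj: "inj_on (pt u1 u2 M j) {..<M j}"
    and nowalk: "\<not> (\<exists>as. as \<noteq> [] \<and> hd as = i \<and> last as = Suc i mod M j \<and> (\<forall>a\<in>set as. a < M j)
     \<and> (\<forall>t. Suc t < length as \<longrightarrow> {pt u1 u2 M j (as!t), pt u1 u2 M j (as!Suc t)} \<in> E)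
     \<and> (\<Sum>t<length as - 1. sdisp (M j) (as!t) (as!Suc t)) = 1)"
    and walk: "is_walk E (pt u1 u2 M j i) (pt u1 u2 M j (Suc i mod M j)) ps"
  shows "4 * (real (M j) - 1) / real (M j) \<le> walk_length ps"
proof -
  define P where "P = pt u1 u2 M j"
  define Mj where "Mj = M j"
  have Mj: "2 \<le> Mj" using M2 by (simp add: Mj_def)
  have w: "ps \<noteq> []" "hd ps = P i" "last ps = P (Suc i mod Mj)"
     "\<And>t. Suc t < length ps \<Longrightarrow> {ps ! t, ps ! Suc t} \<in> E"
    using walk unfolding is_walk_def P_def Mj_def by auto
  have iS: "P i \<in> S" unfolding Sdef P_def using j i by force
  have psS: "set ps \<subseteq> S" using walk_in_S[OF gg walk] iS unfolding P_def by blast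
  show ?thesis
  proof (cases "set ps \<subseteq> P ` {..<Mj}")
    case False
    then obtain x where x: "x \<in> set ps" "x \<notin> P ` {..<Mj}" by blast
    have "x \<in> S" using x psS by blast
    then obtain p where p: "p \<in> (SIGMA j:{..k}. {..<M j})" "x = (\<lambda>(j,a). pt u1 u2 M j a) p"
      unfolding Sdef by (rule imageE)
    obtain j' b where jb: "j' \<le> k" "b < M j'" "x = pt u1 u2 M j' b" using p by (cases p) auto
    have "j' \<noteq> j" using jb x unfolding P_def Mj_def by blast
    hence "4 \<le> dist (P i) x" unfolding P_def jb(3) using dist_diff[OF B] by metis
    moreover obtain t where t: "t < length ps" "x = ps ! t" using x by (auto simp: in_set_conv_nth)
    moreover have "ps ! 0 = P i" using w by (simp add: hd_conv_nth)
    ultimately have "4 \<le> walk_length ps" using walk_length_ge[OF t(1)] by simp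
    moreover have "4 * (real Mj - 1) / real Mj \<le> 4" using Mj by (simp add: field_simps)
    ultimately show ?thesis unfolding Mj_def by linarith
  next
    case True
    define iv where "iv = the_inv_into {..<Mj} P"
    have injP: "inj_on P {..<Mj}" using inj unfolding P_def Mj_def .
    have ivP: "iv (P a) = a" if "a < Mj" for a unfolding iv_def using injP that by (simp add: the_inv_into_f_f)
    have Piv: "P (iv x) = x" "iv x < Mj" if "x \<in> P ` {..<Mj}" for x
      using that injP ivP unfolding iv_def by (auto simp: f_the_inv_into_f)
    define as where "as = map iv ps"
    have las: "length as = length ps" by (simp add: as_def)
    have asn: "as ! t = iv (ps ! t)" "P (as ! t) = ps ! t" "as ! t < Mj" if "t < length ps" for t
    proof -
      have "ps ! t \<in> P ` {..<Mj}" using that True nth_mem by blast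
      thus "as ! t = iv (ps ! t)" "P (as ! t) = ps ! t" "as ! t < Mj"
        using that Piv unfolding as_def by auto
    qed
    have hdas: "hd as = i" using w i ivP unfolding as_def Mj_def by (simp add: hd_map)
    have lastas: "last as = Suc i mod Mj" using w Mj ivP unfolding as_def by (simp add: last_map)
    have setas: "\<forall>a\<in>set as. a < Mj" using asn las by (auto simp: in_set_conv_nth)
    have edges: "\<forall>t. Suc t < length as \<longrightarrow> {P (as!t), P (as!Suc t)} \<in> E"
      using w(4) asn las by auto
    define D where "D = (\<Sum>t<length as - 1. sdisp Mj (as!t) (as!Suc t))"
    have "as \<noteq> []" using w las by auto
    hence D1: "D \<noteq> 1" using nowalk hdas lastas setas edges unfolding D_def P_def Mj_def by blast
    have tel: "(\<Sum>t<length as - 1. int (as!Suc t) - int (as!t)) = int (as ! (length as - 1)) - int (as ! 0)"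
      by (rule sum_lessThan_telescope)
    also have "\<dots> = int (Suc i mod Mj) - int i"
      using \<open>as \<noteq> []\<close> hdas lastas by (simp add: hd_conv_nth last_conv_nth)
    finally have tel2: "(\<Sum>t<length as - 1. int (as!Suc t) - int (as!t)) = int (Suc i mod Mj) - int i" .
    have "int Mj dvd (D - (\<Sum>t<length as - 1. int (as!Suc t) - int (as!t)))"
      unfolding D_def sum_subtractf[symmetric] by (intro dvd_sum) (rule sdisp_dvd)
    moreover have "int Mj dvd (int (Suc i mod Mj) - int i - 1)"
    proof (cases "Suc i < Mj")
      case True thus ?thesis by simp
    next
      case False hence "Suc i = Mj" using i unfolding Mj_def by simp
      hence "int (Suc i mod Mj) - int i - 1 = int Mj * (-1)" by simp
      thus ?thesis by (metis dvd_triv_left)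
    qed
    ultimately have "int Mj dvd (D - 1)" unfolding tel2 using dvd_add by fastforce
    hence Dbig: "real Mj - 1 \<le> \<bar>real_of_int D\<bar>" using disp_big Mj D1 by blast
    have Mpos: "0 < Mj" using Mj by simp
    have "walk_length ps = (\<Sum>t<length as - 1. dist (P (as!t)) (P (as!Suc t)))"
      unfolding walk_length_def las using asn by (intro sum.cong) auto
    also have "\<dots> \<ge> (\<Sum>t<length as - 1. 4 * \<bar>real_of_int (sdisp Mj (as!t) (as!Suc t))\<bar> / real Mj)"
      unfolding P_def using sdisp_chord_lower[OF Mpos] dist_same[OF B]
      by (intro sum_mono) (simp add: Mj_def)
    finally have L1: "(\<Sum>t<length as - 1. 4 * \<bar>real_of_int (sdisp Mj (as!t) (as!Suc t))\<bar> / real Mj) \<le> walk_length ps" .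
    have "(\<Sum>t<length as - 1. 4 * \<bar>real_of_int (sdisp Mj (as!t) (as!Suc t))\<bar> / real Mj)
        = 4 / real Mj * (\<Sum>t<length as - 1. \<bar>real_of_int (sdisp Mj (as!t) (as!Suc t))\<bar>)"
      by (simp add: sum_distrib_left)
    also have "(\<Sum>t<length as - 1. \<bar>real_of_int (sdisp Mj (as!t) (as!Suc t))\<bar>) \<ge> \<bar>real_of_int D\<bar>"
      unfolding D_def of_int_sum by (rule sum_abs)
    hence "4 / real Mj * (\<Sum>t<length as - 1. \<bar>real_of_int (sdisp Mj (as!t) (as!Suc t))\<bar>) \<ge> 4 / real Mj * (real Mj - 1)"
      using Dbig Mpos by (intro mult_left_mono) auto
    finally show ?thesis using L1 unfolding Mj_def by simp
  qed
qed

lemma delta_ge: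
  fixes S :: "'a::metric_space set"
  assumes "finite S" "card S = n" "\<And>E. geo_graph S E \<Longrightarrow> card E = card S - 1 + k \<Longrightarrow> c \<le> dilation S E"
  shows "c \<le> delta TYPE('a) n k"
proof -
  have "c \<le> min_dilation S k" unfolding min_dilation_def using assms(3) by (auto intro!: INF_greatest)
  also have "\<dots> \<le> delta TYPE('a) n k" unfolding delta_def using assms(1,2) by (intro SUP_upper) auto
  finally show ?thesis .
qed

lemma walk_length_nonneg: "0 \<le> walk_length ps"
  unfolding walk_length_def by (intro sum_nonneg) auto

theorem theorem2:
  fixes n k :: nat
  assumes "DIM('a::euclidean_space) \<ge> 2"
    and "0 < k" and "k < n"
  shows "ereal (2 / pi * real_of_int \<lfloor>real n / real (k + 1)\<rfloor> - 1) \<le> delta TYPE('a) n k"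
proof -
  define m where "m = n div (k + 1)"
  have fl: "\<lfloor>real n / real (k + 1)\<rfloor> = int m" unfolding m_def by (metis floor_divide_of_nat_eq)
  have "(k + 1) div (k + 1) \<le> n div (k + 1)" by (rule div_le_mono) (use assms in simp)
  hence m1: "1 \<le> m" unfolding m_def by simp
  have mk: "(k + 1) * m \<le> n" unfolding m_def by (metis div_mult_self1_is_m le_add2 mult.commute times_div_less_eq_dividend zero_less_Suc add.commute) 
  obtain u1 where u1: "u1 \<in> (Basis :: 'a set)" using nonempty_Basis by blast
  have "card (Basis - {u1} :: 'a set) \<ge> 1" using assms(1) u1 by (simp add: card_Diff_singleton)
  then obtain u2 where u2: "u2 \<in> (Basis :: 'a set)" "u2 \<noteq> u1" by (metis Diff_iff card.empty ex_in_conv insert_iff not_one_le_zero)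
  have B: "u1 \<in> Basis" "u2 \<in> Basis" "u1 \<noteq> u2" using u1 u2 by auto
  show ?thesis
  proof (cases "m = 1")
    case True
    define S0 where "S0 = (\<lambda>i. real i *\<^sub>R u1) ` {..<n}"
    have u10: "u1 \<noteq> 0" using u1 by auto
    have injS0: "inj_on (\<lambda>i. real i *\<^sub>R u1) {..<n}" using u10 by (auto simp: inj_on_def)
    have cS0: "card S0 = n" unfolding S0_def using card_image[OF injS0] by simp
    have "ereal 0 \<le> delta TYPE('a) n k"
    proof (rule delta_ge[OF _ cS0])
      show "finite S0" unfolding S0_def by simp
    next
      fix E assume "geo_graph S0 E"
      have in0: "0 \<in> S0" "u1 \<in> S0" unfolding S0_def using assms by (force, force intro: image_eqI[of _ _ 1])
      have "ereal (0 / dist 0 u1) \<le> dilation S0 E"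
        using in0 u10 by (intro dilation_ge graph_dist_ge walk_length_nonneg) auto
      thus "ereal 0 \<le> dilation S0 E" by simp
    qed
    moreover have "2 / pi * real_of_int \<lfloor>real n / real (k + 1)\<rfloor> - 1 \<le> 0"
      unfolding fl True using pi_gt3 by (simp add: field_simps)
    ultimately show ?thesis by (meson ereal_less_eq(3) order_trans)
  next
    case False
    hence m2: "2 \<le> m" using m1 by simp
    define M where "M = (\<lambda>j. if j < k then m else n - k * m)"
    have Mge: "m \<le> M j" if "j \<le> k" for j using mk unfolding M_def by (auto simp: algebra_simps)
    have M2: "2 \<le> M j" if "j \<le> k" for j using Mge[OF that] m2 by simp
    define P where "P = pt u1 u2 M"
    have Pinj: "\<forall>j\<le>k. \<forall>j'\<le>k. \<forall>a<M j. \<forall>b<M j'. P j a = P j' b \<longrightarrow> j = j' \<and> a = b"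
    proof (intro allI impI)
      fix j j' a b assume j: "j \<le> k" "j' \<le> k" "a < M j" "b < M j'" "P j a = P j' b"
      have jj: "j = j'"
      proof (rule ccontr)
        assume "j \<noteq> j'"
        hence "4 \<le> dist (P j a) (P j' b)" unfolding P_def by (rule dist_diff[OF B])
        thus False using j(5) by simp
      qed
      moreover have "a = b"
      proof (rule ccontr)
        assume ab: "a \<noteq> b"
        have Mp: "0 < M j" using M2[OF j(1)] by simp
        have "sdisp (M j) a b \<noteq> 0" using sdisp_nonzero[OF j(3) _ ab] j(4) jj by simp
        hence "0 < 4 * \<bar>real_of_int (sdisp (M j) a b)\<bar> / real (M j)" using Mp by simp
        also have "\<dots> \<le> dist (P j a) (P j b)" unfolding P_def dist_same[OF B]
          by (rule sdisp_chord_lower[OF Mp])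
        finally show False using j(5) jj by simp
      qed
      ultimately show "j = j' \<and> a = b" by simp
    qed
    define Sg where "Sg = (SIGMA j:{..k}. {..<M j})"
    define S where "S = (\<lambda>(j,a). P j a) ` Sg"
    have injS: "inj_on (\<lambda>(j,a). P j a) Sg"
      unfolding Sg_def using Pinj by (auto simp: inj_on_def)
    have sumM: "(\<Sum>j\<le>k. M j) = n"
    proof -
      obtain k' where k': "k = Suc k'" using assms(2) by (cases k) auto
      have "(\<Sum>j\<le>k. M j) = (\<Sum>j\<le>k'. M j) + M k" unfolding k' by simp
      also have "(\<Sum>j\<le>k'. M j) = (\<Sum>j\<le>k'. m)" unfolding M_def k' by (intro sum.cong) auto
      also have "M k = n - k * m" unfolding M_def by simp
      finally show ?thesis using mk k' by (simp add: algebra_simps)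
    qed
    have "card S = card Sg" unfolding S_def by (rule card_image[OF injS])
    also have "card Sg = (\<Sum>j\<le>k. M j)" unfolding Sg_def by simp
    finally have cS: "card S = n" using sumM by simp
    have finS: "finite S" unfolding S_def Sg_def by simp
    have bound: "ereal (2 * (real m - 1) / pi) \<le> dilation S E"
      if gg: "geo_graph S E" and cE: "card E = card S - 1 + k" for E
    proof -
      define r where "r = P 0 0"
      have r: "r \<in> S" unfolding r_def S_def Sg_def using M2[of 0] by force
      show ?thesis
      proof (cases "\<forall>v\<in>S. (\<lambda>x y. {x,y} \<in> E)\<^sup>*\<^sup>* v r")
        case False
        then obtain v where v: "v \<in> S" "\<not> (\<lambda>x y. {x,y} \<in> E)\<^sup>*\<^sup>* v r" by blast
        have "v \<noteq> r" using v by auto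
        hence "dilation S E = \<infinity>" using v r by (intro dilation_inf graph_dist_nowalk) auto
        thus ?thesis by simp
      next
        case True
        have "\<exists>j\<le>k. \<exists>i<M j. \<not> (\<exists>as. as \<noteq> [] \<and> hd as = i \<and> last as = Suc i mod M j \<and> (\<forall>a\<in>set as. a < M j)
           \<and> (\<forall>t. Suc t < length as \<longrightarrow> {P j (as!t), P j (as!Suc t)} \<in> E)
           \<and> (\<Sum>t<length as - 1. sdisp (M j) (as!t) (as!Suc t)) = 1)"
          using comb[OF finS gg r True _ _ Pinj] cE M2 by auto
        then obtain j i where j: "j \<le> k" and i: "i < M j" and nowalk: "\<not> (\<exists>as. as \<noteq> [] \<and> hd as = i \<and> last as = Suc i mod M j \<and> (\<forall>a\<in>set as. a < M j)
           \<and> (\<forall>t. Suc t < length as \<longrightarrow> {P j (as!t), P j (as!Suc t)} \<in> E)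
           \<and> (\<Sum>t<length as - 1. sdisp (M j) (as!t) (as!Suc t)) = 1)" by blast
        have injj: "inj_on (pt u1 u2 M j) {..<M j}" using Pinj j unfolding P_def by (auto simp: inj_on_def)
        define c where "c = 4 * (real (M j) - 1) / real (M j)"
        have gd: "ereal c \<le> graph_dist E (P j i) (P j (Suc i mod M j))"
          unfolding c_def P_def
          by (rule graph_dist_ge, rule walk_bound[OF B gg _ j M2[OF j] i injj])
             (use nowalk S_def Sg_def P_def in auto)
        have Mj: "2 \<le> M j" using M2[OF j] .
        have ui: "P j i \<in> S" "P j (Suc i mod M j) \<in> S" unfolding S_def Sg_def using j i Mj by force+
        have neq: "P j i \<noteq> P j (Suc i mod M j)"
        proof
          assume "P j i = P j (Suc i mod M j)"
          hence "i = Suc i mod M j" using Pinj j i Mj by auto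
          moreover have "Suc i < M j \<or> Suc i = M j" using i by auto
          ultimately show False using Mj by auto
        qed
        have c0: "0 \<le> c" unfolding c_def using Mj by simp
        have d1: "ereal (c / dist (P j i) (P j (Suc i mod M j))) \<le> dilation S E"
          by (rule dilation_ge[OF ui neq gd c0])
        have dpos: "0 < dist (P j i) (P j (Suc i mod M j))" using neq by simp
        have dup: "dist (P j i) (P j (Suc i mod M j)) \<le> 2 * pi / real (M j)"
          unfolding P_def dist_same[OF B] by (rule chord_adj_upper[OF Mj i])
        have "c / (2 * pi / real (M j)) \<le> c / dist (P j i) (P j (Suc i mod M j))"
          using dpos dup c0 Mj by (intro divide_left_mono) (auto intro!: mult_pos_pos)
        moreover have "c / (2 * pi / real (M j)) = 2 * (real (M j) - 1) / pi"
          unfolding c_def using Mj by (simp add: field_simps)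
        moreover have "2 * (real m - 1) / pi \<le> 2 * (real (M j) - 1) / pi"
          using Mge[OF j] by (intro divide_right_mono) auto
        ultimately have "2 * (real m - 1) / pi \<le> c / dist (P j i) (P j (Suc i mod M j))" by linarith
        thus ?thesis using d1 by (meson ereal_less_eq(3) order_trans)
      qed
    qed
    have "ereal (2 * (real m - 1) / pi) \<le> delta TYPE('a) n k"
      using delta_ge[OF finS cS] bound by blast
    moreover have "2 / pi * real_of_int \<lfloor>real n / real (k + 1)\<rfloor> - 1 \<le> 2 * (real m - 1) / pi"
      unfolding fl using pi_gt3 by (simp add: field_simps)
    ultimately show ?thesis by (meson ereal_less_eq(3) order_trans)
  qed
qed

end
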